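(* For every $n\ge 2$, $f(n,0)=(n-2)!$.
   Context: A complete non-ambiguous matrix (CNM) of size $n$ is an $n\times n$ matrix $M=(m_{i,j})$ with entries in $\{0,1\}$ whose support $T=\{(i,j): m_{i,j}=1\}$ (whose elements are called vertices) satisfies: (1) $(1,1)\in T$; (2) for every $p=(i,j)\in T$ with $p\neq(1,1)$, exactly one of the following holds: there is $(i',j)\in T$ with $i'<i$, or there is $(i,j')\in T$ with $j'<j$; (3) every row and every column of $M$ contains at least one vertex; (4) define the parent of $p=(i,j)\neq(1,1)$ to be $(i',j)$ with $i'<i$ maximal if such a vertex exists, and otherwise $(i,j')$ with $j'<j$ maximal; then every vertex is the parent of either zero or exactly two vertices. A vertex with no children is a leaf. A CNM of size $n$ is upper-diagonal if its leaves are exactly the positions $(i,n+1-i)$, $1\le i\le n$. For $n\ge 2$ and $0\le k\le n-2$, $f(n,k)$ is the number of upper-diagonal CNMs $M$ of size $n$ with $m_{i,n-i}=0$ for $1\le i\le k$ and $m_{k+1,n-k-1}=1$; $f(n,n-1)$ is the number of upper-diagonal CNMs of size $n$ with $m_{i,n-i}=0$ for all $1\le i\le n-1$; by convention $f(n,-1)=0$. *)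

theory Defs
  imports Main
begin

text \<open>A 0/1 matrix of size n with rows/columns indexed by 1..n is represented by its
support T (the set of positions (i,j) with entry 1).\<close>

definition cnm_parent :: "(nat \<times> nat) set \<Rightarrow> nat \<times> nat \<Rightarrow> nat \<times> nat" where
  "cnm_parent T p = (let i = fst p; j = snd p in
     if (\<exists>i'. i' < i \<and> (i', j) \<in> T)
     then (GREATEST i'. i' < i \<and> (i', j) \<in> T, j)
     else (i, GREATEST j'. j' < j \<and> (i, j') \<in> T))"

definition cnm_children :: "(nat \<times> nat) set \<Rightarrow> nat \<times> nat \<Rightarrow> (nat \<times> nat) set" where
  "cnm_children T p = {q \<in> T. q \<noteq> (1,1) \<and> cnm_parent T q = p}"

definition is_cnm :: "nat \<Rightarrow> (nat \<times> nat) set \<Rightarrow> bool" where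
  "is_cnm n T \<longleftrightarrow>
     T \<subseteq> {1..n} \<times> {1..n} \<and>
     (1, 1) \<in> T \<and>
     (\<forall>(i, j) \<in> T. (i, j) \<noteq> (1, 1) \<longrightarrow>
        ((\<exists>i'. i' < i \<and> (i', j) \<in> T) \<noteq> (\<exists>j'. j' < j \<and> (i, j') \<in> T))) \<and>
     (\<forall>i \<in> {1..n}. \<exists>j. (i, j) \<in> T) \<and>
     (\<forall>j \<in> {1..n}. \<exists>i. (i, j) \<in> T) \<and>
     (\<forall>p \<in> T. card (cnm_children T p) = 0 \<or> card (cnm_children T p) = 2)"

definition cnm_leaves :: "(nat \<times> nat) set \<Rightarrow> (nat \<times> nat) set" where
  "cnm_leaves T = {p \<in> T. cnm_children T p = {}}"

definition upper_diagonal_cnm :: "nat \<Rightarrow> (nat \<times> nat) set \<Rightarrow> bool" where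
  "upper_diagonal_cnm n T \<longleftrightarrow> is_cnm n T \<and>
     cnm_leaves T = {(i, n + 1 - i) | i. 1 \<le> i \<and> i \<le> n}"

text \<open>f n k for 0 \<le> k \<le> n-2 and k = n-1 (the convention f(n,-1)=0 is not needed
as k is a natural number here; values for k \<ge> n are set to 0).\<close>
definition f_cnm :: "nat \<Rightarrow> nat \<Rightarrow> nat" where
  "f_cnm n k =
     (if k + 2 \<le> n then
        card {T. upper_diagonal_cnm n T \<and> (\<forall>i \<in> {1..k}. (i, n - i) \<notin> T)
                 \<and> (k + 1, n - k - 1) \<in> T}
      else if k + 1 = n then
        card {T. upper_diagonal_cnm n T \<and> (\<forall>i \<in> {1..n-1}. (i, n - i) \<notin> T)}
      else 0)"

end

theory Submission imports Defs "HOL-Library.FuncSet" begin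


lemma greatest_lt:
  fixes x k :: nat
  assumes "k < x" "Q k"
  shows "(GREATEST a. a < x \<and> Q a) < x" "Q (GREATEST a. a < x \<and> Q a)"
        "\<And>a. a < x \<Longrightarrow> Q a \<Longrightarrow> a \<le> (GREATEST a. a < x \<and> Q a)"
proof -
  have "(\<lambda>a. a < x \<and> Q a) (GREATEST a. a < x \<and> Q a)"
    by (rule GreatestI_nat[of _ k x]) (use assms in auto)
  then show "(GREATEST a. a < x \<and> Q a) < x" "Q (GREATEST a. a < x \<and> Q a)" by auto
  fix a assume "a < x" "Q a"
  then show "a \<le> (GREATEST a. a < x \<and> Q a)"
    by (intro Greatest_le_nat[of _ a x]) auto
qed

definition EX1 :: "(nat \<times> nat) set \<Rightarrow> bool" where
  "EX1 T \<longleftrightarrow> (\<forall>i j. (i, j) \<in> T \<longrightarrow> (i, j) \<noteq> (1, 1) \<longrightarrow>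
        ((\<exists>i'. i' < i \<and> (i', j) \<in> T) \<noteq> (\<exists>j'. j' < j \<and> (i, j') \<in> T)))"

lemma parent_sum:
  assumes "EX1 T" "q \<in> T" "q \<noteq> (1,1)"
  shows "fst (cnm_parent T q) + snd (cnm_parent T q) < fst q + snd q"
proof -
  obtain x y where q: "q = (x,y)" by force
  show ?thesis
  proof (cases "\<exists>i'. i' < x \<and> (i', y) \<in> T")
    case True
    then obtain k where "k < x" "(k,y) \<in> T" by auto
    from greatest_lt(1)[of k x "\<lambda>a. (a,y) \<in> T", OF this] True show ?thesis
      unfolding q cnm_parent_def by (simp add: Let_def)
  next
    case False
    with assms q have "\<exists>j'. j' < y \<and> (x, j') \<in> T" unfolding EX1_def by blast
    then obtain k where "k < y" "(x,k) \<in> T" by auto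
    from greatest_lt(1)[of k y "\<lambda>a. (x,a) \<in> T", OF this] False show ?thesis
      unfolding q cnm_parent_def by (auto simp: Let_def)
  qed
qed

lemma UD_facts:
  assumes "upper_diagonal_cnm n T"
  shows "T \<subseteq> {1..n} \<times> {1..n}" "(1,1) \<in> T" "EX1 T"
    "\<And>i. i \<in> {1..n} \<Longrightarrow> (i, Suc n - i) \<in> T"
    "\<And>i j. (i,j) \<in> T \<Longrightarrow> i + j \<le> Suc n"
proof -
  have cnm: "is_cnm n T" and lv: "cnm_leaves T = {(i, n + 1 - i) | i. 1 \<le> i \<and> i \<le> n}"
    using assms unfolding upper_diagonal_cnm_def by simp_all
  note c = cnm[unfolded is_cnm_def]
  show sub: "T \<subseteq> {1..n} \<times> {1..n}" using c by (rule conjunct1)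
  show root: "(1,1) \<in> T" using c[THEN conjunct2] by (rule conjunct1)
  have c3: "\<forall>(i, j) \<in> T. (i, j) \<noteq> (1, 1) \<longrightarrow>
        ((\<exists>i'. i' < i \<and> (i', j) \<in> T) \<noteq> (\<exists>j'. j' < j \<and> (i, j') \<in> T))"
    using c[THEN conjunct2, THEN conjunct2] by (rule conjunct1)
  show ex: "EX1 T" unfolding EX1_def
  proof (intro allI impI)
    fix i j assume a: "(i,j) \<in> T" "(i,j) \<noteq> (1,1)"
    show "(\<exists>i'. i' < i \<and> (i', j) \<in> T) \<noteq> (\<exists>j'. j' < j \<and> (i, j') \<in> T)"
      using bspec[OF c3 a(1)] a(2) by simp
  qed
  show "\<And>i. i \<in> {1..n} \<Longrightarrow> (i, Suc n - i) \<in> T"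
  proof -
    fix i assume "i \<in> {1..n}"
    then have "(i, Suc n - i) \<in> cnm_leaves T" using lv by auto
    then show "(i, Suc n - i) \<in> T" unfolding cnm_leaves_def by auto
  qed
  have fin: "finite T" using sub(1) by (rule finite_subset) auto
  define s where "s = Max ((\<lambda>p. fst p + snd p) ` T)"
  have "s \<in> (\<lambda>p. fst p + snd p) ` T" unfolding s_def using root fin by (intro Max_in) auto
  then obtain p where p: "p \<in> T" "fst p + snd p = s" by auto
  have smax: "\<And>q. q \<in> T \<Longrightarrow> fst q + snd q \<le> s" using fin unfolding s_def by auto
  have "cnm_children T p = {}"
  proof (rule ccontr)
    assume "cnm_children T p \<noteq> {}"
    then obtain q where q: "q \<in> T" "q \<noteq> (1,1)" "cnm_parent T q = p"
      unfolding cnm_children_def by auto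
    from parent_sum[OF ex q(1,2)] q(3) have "s < fst q + snd q" using p by simp
    with smax[OF q(1)] show False by simp
  qed
  then have "p \<in> cnm_leaves T" using p unfolding cnm_leaves_def by auto
  then obtain i0 where "p = (i0, n + 1 - i0)" "1 \<le> i0" "i0 \<le> n" using lv by auto
  then have "s = Suc n" using p by simp
  then show "\<And>i j. (i,j) \<in> T \<Longrightarrow> i + j \<le> Suc n" using smax by (metis fst_conv snd_conv)
qed

lemma UD_intro:
  assumes sub: "T \<subseteq> {1..n} \<times> {1..n}" and root: "(1,1) \<in> T" and ex: "EX1 T"
    and anti: "\<And>i. i \<in> {1..n} \<Longrightarrow> (i, Suc n - i) \<in> T"
    and stair: "\<And>i j. (i,j) \<in> T \<Longrightarrow> i + j \<le> Suc n"
  shows "upper_diagonal_cnm n T"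
proof -
  have leafc: "cnm_children T (i,j) = {}" if "(i,j) \<in> T" "i + j = Suc n" for i j
  proof (rule ccontr)
    assume "cnm_children T (i,j) \<noteq> {}"
    then obtain q where q: "q \<in> T" "q \<noteq> (1,1)" "cnm_parent T q = (i,j)"
      unfolding cnm_children_def by auto
    from parent_sum[OF ex q(1,2)] q(3) stair[of "fst q" "snd q"] q(1) that show False by simp
  qed
  have intc: "card (cnm_children T (i,j)) = 2" if ij: "(i,j) \<in> T" "i + j < Suc n" for i j
  proof -
    have ij1: "1 \<le> i" "1 \<le> j" "i \<le> n" "j \<le> n" using sub ij by auto
    define d where "d = (LEAST x. i < x \<and> (x,j) \<in> T)"
    define r where "r = (LEAST y. j < y \<and> (i,y) \<in> T)"
    have "(Suc n - j, Suc n - (Suc n - j)) \<in> T" by (rule anti) (use ij1 in auto)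
    then have "i < Suc n - j \<and> (Suc n - j, j) \<in> T" using ij ij1 by auto
    then have d: "i < d" "(d,j) \<in> T" "\<And>x. i < x \<Longrightarrow> (x,j) \<in> T \<Longrightarrow> d \<le> x"
      unfolding d_def by (metis (mono_tags, lifting) LeastI Least_le)+
    have "(i, Suc n - i) \<in> T" by (rule anti) (use ij1 in auto)
    then have "j < Suc n - i \<and> (i, Suc n - i) \<in> T" using ij ij1 by auto
    then have r: "j < r" "(i,r) \<in> T" "\<And>y. j < y \<Longrightarrow> (i,y) \<in> T \<Longrightarrow> r \<le> y"
      unfolding r_def by (metis (mono_tags, lifting) LeastI Least_le)+
    have pd: "cnm_parent T (d,j) = (i,j)"
    proof -
      have "(GREATEST a. a < d \<and> (a,j) \<in> T) = i"
      proof (rule Greatest_equality)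
        show "i < d \<and> (i,j) \<in> T" using d(1) ij(1) by simp
        fix y assume "y < d \<and> (y,j) \<in> T"
        then show "y \<le> i" using d(3)[of y] by (metis leI not_less)
      qed
      then show ?thesis using d ij unfolding cnm_parent_def by (auto simp: Let_def)
    qed
    have nab: "\<not> (\<exists>i'. i' < i \<and> (i', r) \<in> T)"
    proof -
      have "(i,r) \<noteq> (1,1)" using r(1) ij1 by auto
      from ex[unfolded EX1_def, rule_format, OF r(2) this] r(1) ij(1) show ?thesis by auto
    qed
    have pr: "cnm_parent T (i,r) = (i,j)"
    proof -
      have "(GREATEST a. a < r \<and> (i,a) \<in> T) = j"
      proof (rule Greatest_equality)
        show "j < r \<and> (i,j) \<in> T" using r(1) ij(1) by simp
        fix y assume "y < r \<and> (i,y) \<in> T"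
        then show "y \<le> j" using r(3)[of y] by (metis leI not_less)
      qed
      then show ?thesis using nab unfolding cnm_parent_def by (auto simp: Let_def)
    qed
    have "cnm_children T (i,j) = {(d,j),(i,r)}"
    proof
      show "{(d,j),(i,r)} \<subseteq> cnm_children T (i,j)"
        using pd pr d r ij1 unfolding cnm_children_def by auto
    next
      show "cnm_children T (i,j) \<subseteq> {(d,j),(i,r)}"
      proof
        fix q assume "q \<in> cnm_children T (i,j)"
        then obtain x y where q: "q = (x,y)" "(x,y) \<in> T" "(x,y) \<noteq> (1,1)" "cnm_parent T (x,y) = (i,j)"
          unfolding cnm_children_def by (cases q) auto
        show "q \<in> {(d,j),(i,r)}"
        proof (cases "\<exists>i'. i' < x \<and> (i', y) \<in> T")
          case True
          then obtain k where k: "k < x" "(k,y) \<in> T" by auto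
          have e: "y = j" "(GREATEST a. a < x \<and> (a,y) \<in> T) = i"
            using q(4) True unfolding cnm_parent_def by (auto simp: Let_def)
          note g = greatest_lt[of k x "\<lambda>a. (a,y) \<in> T", OF k]
          have "i < x" using g(1) e by simp
          then have "d \<le> x" using d(3) q(2) e by auto
          moreover have "\<not> d < x" using g(3)[of d] d e by auto
          ultimately show ?thesis using q e by auto
        next
          case False
          with ex q have "\<exists>j'. j' < y \<and> (x, j') \<in> T" unfolding EX1_def by blast
          then obtain k where k: "k < y" "(x,k) \<in> T" by auto
          have e: "x = i" "(GREATEST a. a < y \<and> (x,a) \<in> T) = j"
            using q(4) False unfolding cnm_parent_def by (auto simp: Let_def)
          note g = greatest_lt[of k y "\<lambda>a. (x,a) \<in> T", OF k]
          have "j < y" using g(1) e by simp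
          then have "r \<le> y" using r(3) q(2) e by auto
          moreover have "\<not> r < y" using g(3)[of r] r e by auto
          ultimately show ?thesis using q e by auto
        qed
      qed
    qed
    then show ?thesis using d(1) by auto
  qed
  have lv: "cnm_leaves T = {(i, n + 1 - i) | i. 1 \<le> i \<and> i \<le> n}"
  proof
    show "cnm_leaves T \<subseteq> {(i, n + 1 - i) | i. 1 \<le> i \<and> i \<le> n}"
    proof
      fix p assume p: "p \<in> cnm_leaves T"
      obtain i j where pij: "p = (i,j)" by force
      have "(i,j) \<in> T" "cnm_children T (i,j) = {}" using p pij unfolding cnm_leaves_def by auto
      moreover have "\<not> i + j < Suc n" using intc calculation by fastforce
      ultimately show "p \<in> {(i, n + 1 - i) | i. 1 \<le> i \<and> i \<le> n}"
        using stair[of i j] sub pij by force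
    qed
  next
    show "{(i, n + 1 - i) | i. 1 \<le> i \<and> i \<le> n} \<subseteq> cnm_leaves T"
      using anti leafc unfolding cnm_leaves_def by fastforce
  qed
  have "is_cnm n T"
    unfolding is_cnm_def
  proof (intro conjI)
    show "T \<subseteq> {1..n} \<times> {1..n}" "(1,1) \<in> T" by fact+
    show "\<forall>(i, j)\<in>T. (i, j) \<noteq> (1, 1) \<longrightarrow>
        ((\<exists>i'. i' < i \<and> (i', j) \<in> T) \<noteq> (\<exists>j'. j' < j \<and> (i, j') \<in> T))"
      using ex unfolding EX1_def by blast
    show "\<forall>i\<in>{1..n}. \<exists>j. (i, j) \<in> T" using anti by blast
    show "\<forall>j\<in>{1..n}. \<exists>i. (i, j) \<in> T"
    proof
      fix j assume "j \<in> {1..n}"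
      then have "(Suc n - j, Suc n - (Suc n - j)) \<in> T" by (intro anti) auto
      then show "\<exists>i. (i, j) \<in> T" using \<open>j \<in> {1..n}\<close> by (metis atLeastAtMost_iff diff_diff_cancel le_SucI)
    qed
    show "\<forall>p\<in>T. card (cnm_children T p) = 0 \<or> card (cnm_children T p) = 2"
    proof
      fix p assume "p \<in> T"
      obtain i j where "p = (i,j)" by force
      with \<open>p \<in> T\<close> stair[of i j] leafc[of i j] intc[of i j] show "card (cnm_children T p) = 0 \<or> card (cnm_children T p) = 2"
        by (cases "i + j = Suc n") auto
    qed
  qed
  then show ?thesis using lv unfolding upper_diagonal_cnm_def by auto
qed



inductive anc :: "(nat \<Rightarrow> nat) \<Rightarrow> nat \<Rightarrow> nat \<Rightarrow> nat \<Rightarrow> bool" for P n where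
  anc_refl: "anc P n d d"
| anc_step: "2 \<le> d \<Longrightarrow> d \<le> n \<Longrightarrow> anc P n b (P d) \<Longrightarrow> anc P n b d"

definition lf :: "(nat \<Rightarrow> nat) \<Rightarrow> nat \<Rightarrow> nat \<Rightarrow> nat" where
  "lf P n b = Max {d \<in> {1..n}. anc P n b d}"

definition MS :: "(nat \<Rightarrow> nat) \<Rightarrow> nat \<Rightarrow> nat \<Rightarrow> nat set" where
  "MS P n a = insert a {lf P n b | b. b \<in> {2..n} \<and> P b = a}"

definition TP :: "(nat \<Rightarrow> nat) \<Rightarrow> nat \<Rightarrow> (nat \<times> nat) set" where
  "TP P n = {(a, Suc n - m) | a m. a \<in> {1..n} \<and> m \<in> MS P n a}"

locale rtree =
  fixes P :: "nat \<Rightarrow> nat" and n :: nat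
  assumes n2: "2 \<le> n"
    and Pb: "\<And>b. b \<in> {2..n} \<Longrightarrow> 1 \<le> P b \<and> P b < b"
begin

abbreviation "A \<equiv> anc P n"
abbreviation "L \<equiv> lf P n"
abbreviation "M \<equiv> MS P n"

lemma anc_le: "A b d \<Longrightarrow> b \<le> d"
  by (induction rule: anc.induct) (use Pb in force)+

lemma anc_ge1: "A b d \<Longrightarrow> 1 \<le> d \<Longrightarrow> d \<le> n \<Longrightarrow> 1 \<le> b"
proof (induction rule: anc.induct)
  case (anc_refl d) then show ?case by simp
next
  case (anc_step d b) then show ?case using Pb[of d] by auto
qed

lemma anc_trans: "A b c \<Longrightarrow> A a b \<Longrightarrow> A a c"
  by (induction rule: anc.induct) (auto intro: anc_step)

lemma anc_root: "1 \<le> d \<Longrightarrow> d \<le> n \<Longrightarrow> A 1 d"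
proof (induction d rule: less_induct)
  case (less d)
  show ?case
  proof (cases "d = 1")
    case True then show ?thesis by (simp add: anc_refl)
  next
    case False
    then have d: "2 \<le> d" "d \<le> n" using less by auto
    then have "A 1 (P d)" using less Pb[of d] by auto
    then show ?thesis using d by (rule anc_step[rotated 2])
  qed
qed

lemma anc_parent: "b \<in> {2..n} \<Longrightarrow> A (P b) b"
  by (rule anc_step) (auto intro: anc_refl)

lemma anc_child: "A a d \<Longrightarrow> a \<noteq> d \<Longrightarrow> \<exists>c. c \<in> {2..n} \<and> P c = a \<and> A c d"
proof (induction rule: anc.induct)
  case (anc_refl d) then show ?case by simp
next
  case (anc_step d b)
  show ?case
  proof (cases "b = P d")
    case True then show ?thesis using anc_step by (auto intro: anc_refl)
  next
    case False
    then obtain c where "c \<in> {2..n}" "P c = b" "A c (P d)" using anc_step by auto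
    then show ?thesis using anc_step by (auto intro: anc.anc_step)
  qed
qed

lemma anc_inv: "A b d \<Longrightarrow> b \<noteq> d \<Longrightarrow> 2 \<le> d \<and> d \<le> n \<and> A b (P d)"
  by (induction rule: anc.induct) auto

lemma anc_lin: "A b m \<Longrightarrow> A b' m \<Longrightarrow> A b b' \<or> A b' b"
proof (induction arbitrary: b' rule: anc.induct)
  case (anc_refl d) then show ?case by simp
next
  case (anc_step d b)
  show ?case
  proof (cases "b' = d")
    case True then show ?thesis using anc_step by (auto intro: anc.anc_step)
  next
    case False
    then have "A b' (P d)" using anc_inv[of b' d] anc_step.prems by simp
    then show ?thesis using anc_step by blast
  qed
qed

lemma lf_props:
  assumes "b \<in> {1..n}"
  shows "L b \<in> {1..n}" "A b (L b)" "b \<le> L b" "\<And>d. A b d \<Longrightarrow> d \<le> n \<Longrightarrow> d \<le> L b"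
proof -
  let ?D = "{d \<in> {1..n}. A b d}"
  have fin: "finite ?D" by auto
  have bD: "b \<in> ?D" using assms by (auto intro: anc_refl)
  have "L b \<in> ?D" unfolding lf_def using fin bD by (intro Max_in) auto
  then show "L b \<in> {1..n}" "A b (L b)" by auto
  show "b \<le> L b" unfolding lf_def using fin bD by (intro Max_ge) auto
  fix d assume "A b d" "d \<le> n"
  moreover have "1 \<le> d" using anc_le[OF \<open>A b d\<close>] assms by auto
  ultimately show "d \<le> L b" unfolding lf_def using fin by (intro Max_ge) auto
qed

lemma lf_mono: "A a b \<Longrightarrow> a \<in> {1..n} \<Longrightarrow> b \<in> {1..n} \<Longrightarrow> L b \<le> L a"
  using lf_props[of b] lf_props(4)[of a "L b"] anc_trans by auto

lemma lf_1: "L 1 = n"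
proof -
  have "n \<le> L 1" by (rule lf_props(4)) (use anc_root[of n] n2 in auto)
  moreover have "L 1 \<le> n" using lf_props(1)[of 1] n2 by auto
  ultimately show ?thesis by simp
qed

lemma lf_leaf: "a \<in> {1..n} \<Longrightarrow> \<not> (\<exists>c\<in>{2..n}. P c = a) \<Longrightarrow> L a = a"
  using lf_props[of a] anc_child[of a "L a"] by (metis)

lemma lf_in_M: assumes "a \<in> {1..n}" shows "L a \<in> M a"
proof (cases "L a = a")
  case True then show ?thesis unfolding MS_def by simp
next
  case False
  from anc_child[OF lf_props(2)[OF assms]] False
  obtain c where c: "c \<in> {2..n}" "P c = a" "A c (L a)" by auto
  have "L a \<le> L c" using lf_props(4)[of c "L a"] c lf_props(1)[OF assms] by auto
  moreover have "L c \<le> L a" using lf_mono[of a c] c assms anc_parent[of c] by auto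
  ultimately have "L a = L c" by simp
  then show ?thesis unfolding MS_def using c by auto
qed

lemma M_props:
  assumes "a \<in> {1..n}" "m \<in> M a"
  shows "a \<le> m" "m \<le> L a" "m \<le> n"
proof -
  have "a \<le> m \<and> m \<le> L a"
  proof (cases "m = a")
    case True then show ?thesis using lf_props[OF assms(1)] by simp
  next
    case False
    then obtain b where b: "b \<in> {2..n}" "P b = a" "m = L b" using assms(2) unfolding MS_def by auto
    have "a < b" using Pb b by auto
    moreover have "b \<le> L b" using lf_props(3)[of b] b by auto
    moreover have "L b \<le> L a" using lf_mono[of a b] b assms anc_parent[of b] by auto
    ultimately show ?thesis using b by simp
  qed
  then show "a \<le> m" "m \<le> L a" by auto
  then show "m \<le> n" using lf_props(1)[OF assms(1)] by auto
qed

lemma TP_mem: "(i,j) \<in> TP P n \<longleftrightarrow> i \<in> {1..n} \<and> j \<in> {1..n} \<and> Suc n - j \<in> M i"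
proof
  assume "(i,j) \<in> TP P n"
  then obtain m where m: "i \<in> {1..n}" "m \<in> M i" "j = Suc n - m" unfolding TP_def by auto
  then show "i \<in> {1..n} \<and> j \<in> {1..n} \<and> Suc n - j \<in> M i"
    using M_props[OF m(1,2)] by auto
next
  assume a: "i \<in> {1..n} \<and> j \<in> {1..n} \<and> Suc n - j \<in> M i"
  then have "j = Suc n - (Suc n - j)" by auto
  then show "(i,j) \<in> TP P n" unfolding TP_def using a by blast
qed

lemma above_char:
  assumes i: "i \<in> {1..n}" and m: "m \<in> M i"
  shows "(\<exists>i'. 1 \<le> i' \<and> i' < i \<and> m \<in> M i') \<longleftrightarrow> (2 \<le> i \<and> L i = m)"
proof
  assume "2 \<le> i \<and> L i = m"
  then have "i \<in> {2..n}" "L i = m" using i by auto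
  moreover then have "m \<in> M (P i)" unfolding MS_def by auto
  ultimately show "\<exists>i'. 1 \<le> i' \<and> i' < i \<and> m \<in> M i'" using Pb by blast
next
  assume "\<exists>i'. 1 \<le> i' \<and> i' < i \<and> m \<in> M i'"
  then obtain i' where i': "1 \<le> i'" "i' < i" "m \<in> M i'" by auto
  have mi: "i \<le> m" using M_props[OF i m] by simp
  then have "m \<noteq> i'" using i' by simp
  then obtain b' where b': "b' \<in> {2..n}" "P b' = i'" "m = L b'" using i'(3) unfolding MS_def by auto
  have Ab'm: "A b' m" using lf_props(2)[of b'] b' by auto
  have "A b' i"
  proof (cases "m = i")
    case True then show ?thesis using Ab'm by simp
  next
    case False
    then obtain b where b: "b \<in> {2..n}" "P b = i" "m = L b" using m unfolding MS_def by auto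
    have Abm: "A b m" using lf_props(2)[of b] b by auto
    have ib: "i < b" using Pb b by auto
    from anc_lin[OF Abm Ab'm] show ?thesis
    proof
      assume "A b b'"
      moreover have "b \<noteq> b'" using b b' i' by auto
      ultimately have "A b (P b')" using anc_inv by blast
      then have "b \<le> i'" using anc_le b' by auto
      then show ?thesis using ib i' by simp
    next
      assume "A b' b"
      moreover have "b' \<noteq> b" using b b' i' by auto
      ultimately show "A b' i" using anc_inv b by blast
    qed
  qed
  then have "L i \<le> L b'" using lf_mono[of b' i] b' i by auto
  then have "L i = m" using M_props(2)[OF i m] b' by simp
  then show "2 \<le> i \<and> L i = m" using i' by simp
qed

lemma left_char:
  assumes i: "i \<in> {1..n}" and m: "m \<in> M i"
  shows "(\<exists>m'. m < m' \<and> m' \<le> n \<and> m' \<in> M i) \<longleftrightarrow> m < L i"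
proof
  assume "\<exists>m'. m < m' \<and> m' \<le> n \<and> m' \<in> M i"
  then obtain m' where "m < m'" "m' \<in> M i" by auto
  then show "m < L i" using M_props(2)[OF i] by fastforce
next
  assume "m < L i"
  then show "\<exists>m'. m < m' \<and> m' \<le> n \<and> m' \<in> M i"
    using lf_in_M[OF i] lf_props(1)[OF i] by auto
qed

lemma TP_EX1: "EX1 (TP P n)"
  unfolding EX1_def
proof (intro allI impI)
  fix i j assume ij: "(i,j) \<in> TP P n" "(i,j) \<noteq> (1,1)"
  then have i: "i \<in> {1..n}" and j: "j \<in> {1..n}" and m: "Suc n - j \<in> M i" using TP_mem by auto
  define m where "m = Suc n - j"
  have above: "(\<exists>i'. i' < i \<and> (i', j) \<in> TP P n) \<longleftrightarrow> (\<exists>i'. 1 \<le> i' \<and> i' < i \<and> m \<in> M i')"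
    using TP_mem j m_def i by auto
  have left: "(\<exists>j'. j' < j \<and> (i, j') \<in> TP P n) \<longleftrightarrow> (\<exists>m'. m < m' \<and> m' \<le> n \<and> m' \<in> M i)"
  proof
    assume "\<exists>j'. j' < j \<and> (i, j') \<in> TP P n"
    then obtain j' where "j' < j" "(i,j') \<in> TP P n" by auto
    then show "\<exists>m'. m < m' \<and> m' \<le> n \<and> m' \<in> M i" using TP_mem m_def j
      by (intro exI[of _ "Suc n - j'"]) auto
  next
    assume "\<exists>m'. m < m' \<and> m' \<le> n \<and> m' \<in> M i"
    then obtain m' where m': "m < m'" "m' \<le> n" "m' \<in> M i" by auto
    have "m' \<ge> 1" using M_props(1)[OF i m'(3)] i by auto
    then have "Suc n - m' < j \<and> (i, Suc n - m') \<in> TP P n"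
      using TP_mem i m' m_def j by auto
    then show "\<exists>j'. j' < j \<and> (i, j') \<in> TP P n" by blast
  qed
  have mM: "m \<in> M i" using m m_def by simp
  have mle: "m \<le> L i" using M_props(2)[OF i mM] .
  show "(\<exists>i'. i' < i \<and> (i', j) \<in> TP P n) \<noteq> (\<exists>j'. j' < j \<and> (i, j') \<in> TP P n)"
  proof (cases "m < L i")
    case True
    then show ?thesis unfolding above left above_char[OF i mM] left_char[OF i mM] by simp
  next
    case False
    then have e: "L i = m" using mle by simp
    have "i \<noteq> 1"
    proof
      assume "i = 1"
      then have "m = n" using e lf_1 by simp
      then have "j = 1" using m_def j by auto
      then show False using ij(2) \<open>i = 1\<close> by simp
    qed
    then show ?thesis unfolding above left above_char[OF i mM] left_char[OF i mM] using e i by auto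
  qed
qed

lemma TP_UD: "upper_diagonal_cnm n (TP P n)"
proof (rule UD_intro)
  show "TP P n \<subseteq> {1..n} \<times> {1..n}" using TP_mem by auto
  show "(1,1) \<in> TP P n" using TP_mem lf_in_M[of 1] lf_1 n2 by auto
  show "EX1 (TP P n)" by (rule TP_EX1)
  fix i assume "i \<in> {1..n}"
  then show "(i, Suc n - i) \<in> TP P n" using TP_mem unfolding MS_def by auto
next
  fix i j assume "(i,j) \<in> TP P n"
  then have "i \<in> {1..n}" "j \<in> {1..n}" "Suc n - j \<in> M i" using TP_mem by auto
  then show "i + j \<le> Suc n" using M_props(1)[of i "Suc n - j"] by auto
qed

end



definition Lc :: "(nat \<times> nat) set \<Rightarrow> nat \<Rightarrow> nat" where
  "Lc T i = (LEAST j. (i,j) \<in> T)"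

definition PT :: "(nat \<times> nat) set \<Rightarrow> nat \<Rightarrow> nat \<Rightarrow> nat" where
  "PT T n = (\<lambda>b. if b \<in> {2..n} then (GREATEST a. a < b \<and> (a, Lc T b) \<in> T) else undefined)"

definition PF :: "nat \<Rightarrow> (nat \<Rightarrow> nat) set" where
  "PF n = PiE {2..n} (\<lambda>b. {1..<b} - {2})"

context rtree begin

lemma Lc_TP: assumes b: "b \<in> {1..n}" shows "Lc (TP P n) b = Suc n - L b"
  unfolding Lc_def
proof (rule Least_equality)
  have "L b \<in> {1..n}" "L b \<in> M b" using lf_props(1)[OF b] lf_in_M[OF b] by auto
  then show "(b, Suc n - L b) \<in> TP P n" using TP_mem b by auto
next
  fix j assume "(b, j) \<in> TP P n"
  then have "j \<in> {1..n}" "Suc n - j \<in> M b" using TP_mem by auto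
  then show "Suc n - L b \<le> j" using M_props(2)[OF b] by fastforce
qed

lemma PT_TP_b: assumes b: "b \<in> {2..n}"
  shows "(GREATEST a. a < b \<and> (a, Suc n - L b) \<in> TP P n) = P b"
proof (rule Greatest_equality)
  have Lb: "L b \<in> {1..n}" using lf_props(1)[of b] b by auto
  have "L b \<in> M (P b)" unfolding MS_def using b by auto
  then show "P b < b \<and> (P b, Suc n - L b) \<in> TP P n" using TP_mem Pb[OF b] Lb b by auto
next
  fix a assume a: "a < b \<and> (a, Suc n - L b) \<in> TP P n"
  have Lb: "L b \<in> {1..n}" "b \<le> L b" "A b (L b)" using lf_props[of b] b by auto
  have aM: "a \<in> {1..n}" "L b \<in> M a" using a TP_mem Lb by auto
  have "L b \<noteq> a" using a Lb by auto
  then obtain b' where b': "b' \<in> {2..n}" "P b' = a" "L b = L b'" using aM(2) unfolding MS_def by auto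
  have Ab': "A b' (L b)" using lf_props(2)[of b'] b' by auto
  from anc_lin[OF Lb(3) Ab'] show "a \<le> P b"
  proof
    assume h: "A b b'"
    show ?thesis
    proof (cases "b = b'")
      case True then show ?thesis using b' by simp
    next
      case False
      then have "A b (P b')" using anc_inv[OF h] by simp
      then have "b \<le> a" using anc_le b' by auto
      then show ?thesis using a by simp
    qed
  next
    assume h: "A b' b"
    show ?thesis
    proof (cases "b = b'")
      case True then show ?thesis using b' by simp
    next
      case False
      then have "A b' (P b)" using anc_inv[OF h] by simp
      then have "b' \<le> P b" using anc_le by auto
      then show ?thesis using b' Pb[of b'] by auto
    qed
  qed
qed

lemma PT_TP: assumes "P \<in> extensional {2..n}" shows "PT (TP P n) n = P"
proof
  fix b show "PT (TP P n) n b = P b"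
  proof (cases "b \<in> {2..n}")
    case True
    then show ?thesis unfolding PT_def using Lc_TP[of b] PT_TP_b[OF True] by auto
  next
    case False
    then show ?thesis unfolding PT_def using assms by (auto simp: extensional_def)
  qed
qed

end

lemma PF_rtree: assumes "P \<in> PF n" "2 \<le> n" shows "rtree P n"
proof
  show "2 \<le> n" by (rule assms(2))
  fix b assume b: "b \<in> {2..n}"
  have "P b \<in> {1..<b} - {2}" using assms(1) b unfolding PF_def by (rule PiE_mem)
  then show "1 \<le> P b \<and> P b < b" by simp
qed

lemma PF_corner:
  assumes "P \<in> PF n" "2 \<le> n" shows "(1, n - 1) \<in> TP P n"
proof -
  interpret rtree P n using PF_rtree assms .
  have "P 2 \<in> {1..<2} - {2}" using assms(1) unfolding PF_def by (rule PiE_mem) (use assms(2) in simp)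
  then have P2: "P 2 = 1" by auto
  have pc: "\<And>c. c \<in> {2..n} \<Longrightarrow> P c \<in> {1..<c} - {2}" using assms(1) unfolding PF_def by (rule PiE_mem)
  have nc: "\<not> (\<exists>c\<in>{2..n}. P c = 2)"
  proof
    assume "\<exists>c\<in>{2..n}. P c = 2"
    then obtain c where "c \<in> {2..n}" "P c = 2" by auto
    with pc[of c] show False by simp
  qed
  have "lf P n 2 = 2" by (rule lf_leaf) (use nc assms(2) in auto)
  moreover have "2 \<in> {2..n}" using assms(2) by simp
  ultimately have "2 \<in> {lf P n b | b. b \<in> {2..n} \<and> P b = 1}" using P2 by (metis (mono_tags, lifting) mem_Collect_eq)
  moreover have e: "Suc n - (n - 1) = 2" using assms(2) by simp
  ultimately have m: "Suc n - (n - 1) \<in> MS P n 1" unfolding MS_def by simp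
  have "1 \<in> {1..n}" "n - 1 \<in> {1..n}" using assms(2) by auto
  then show ?thesis using TP_mem m by blast
qed

locale udt =
  fixes T :: "(nat \<times> nat) set" and n :: nat
  assumes ud: "upper_diagonal_cnm n T" and n2: "2 \<le> n" and corner: "(1, n - 1) \<in> T"
begin

lemmas sub = UD_facts(1)[OF ud] and root = UD_facts(2)[OF ud] and ex = UD_facts(3)[OF ud]
  and anti = UD_facts(4)[OF ud] and stair = UD_facts(5)[OF ud]

lemma Lc_le: "(i,j) \<in> T \<Longrightarrow> Lc T i \<le> j"
  unfolding Lc_def by (rule Least_le[of "\<lambda>j. (i,j) \<in> T"])

lemma Lc_in: "i \<in> {1..n} \<Longrightarrow> (i, Lc T i) \<in> T"
  unfolding Lc_def by (rule LeastI[of "\<lambda>j. (i,j) \<in> T"], rule anti)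

lemma below_head: assumes "(a,c) \<in> T" "(x,c) \<in> T" "a < x" shows "Lc T x = c"
proof -
  have x: "x \<in> {1..n}" using sub assms(2) by auto
  have ne: "(x,c) \<noteq> (1,1)" using assms(3) assms(1) sub by auto
  have ab: "\<exists>i'. i' < x \<and> (i',c) \<in> T" using assms(1,3) by blast
  from ex[unfolded EX1_def, rule_format, OF assms(2) ne] ab
  have nl: "\<not> (\<exists>j'. j' < c \<and> (x, j') \<in> T)" by simp
  have "Lc T x \<le> c" using Lc_le[OF assms(2)] .
  moreover have "\<not> Lc T x < c" using nl Lc_in[OF x] by auto
  ultimately show ?thesis by simp
qed

lemma head_above: assumes b: "b \<in> {2..n}" shows "\<exists>a<b. (a, Lc T b) \<in> T"
proof -
  have bin: "(b, Lc T b) \<in> T" using Lc_in b by auto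
  have ne: "(b, Lc T b) \<noteq> (1,1)" using b by auto
  have "\<not> (\<exists>j'. j' < Lc T b \<and> (b, j') \<in> T)" using Lc_le by fastforce
  with ex[unfolded EX1_def, rule_format, OF bin ne] show ?thesis by simp
qed

lemma PT_props: assumes b: "b \<in> {2..n}"
  shows "PT T n b < b" "(PT T n b, Lc T b) \<in> T" "\<And>a. a < b \<Longrightarrow> (a, Lc T b) \<in> T \<Longrightarrow> a \<le> PT T n b"
proof -
  obtain k where k: "k < b" "(k, Lc T b) \<in> T" using head_above[OF b] by auto
  note g = greatest_lt[of k b "\<lambda>a. (a, Lc T b) \<in> T", OF k]
  have e: "PT T n b = (GREATEST a. a < b \<and> (a, Lc T b) \<in> T)" unfolding PT_def using b by simp
  show "PT T n b < b" "(PT T n b, Lc T b) \<in> T" using g e by auto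
  fix a assume "a < b" "(a, Lc T b) \<in> T" then show "a \<le> PT T n b" using g(3) e by auto
qed

lemma PT_ge1: "b \<in> {2..n} \<Longrightarrow> 1 \<le> PT T n b"
  using PT_props(2) sub by fastforce

lemma PT_ne2: assumes b: "b \<in> {2..n}" shows "PT T n b \<noteq> 2"
proof
  assume h: "PT T n b = 2"
  let ?c = "Lc T b"
  have c2: "(2, ?c) \<in> T" using PT_props(2)[OF b] h by simp
  have bgt: "2 < b" using PT_props(1)[OF b] h by simp
  have "(2, Suc n - 2) \<in> T" by (rule anti) (use n2 in auto)
  moreover have "Suc n - 2 = n - 1" using n2 by auto
  ultimately have d2: "(2, n - 1) \<in> T" by simp
  have "Lc T 2 = n - 1" using below_head[OF corner d2] by simp
  then have "n - 1 \<le> ?c" using Lc_le[OF c2] by simp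
  moreover have "(b, ?c) \<in> T" using Lc_in b by auto
  then have "b + ?c \<le> Suc n" using stair by auto
  ultimately show False using bgt n2 by auto
qed

lemma PT_PF: "PT T n \<in> PF n"
  unfolding PF_def
proof (rule PiE_I)
  fix b assume b: "b \<in> {2..n}"
  then show "PT T n b \<in> {1..<b} - {2}" using PT_props(1)[OF b] PT_ge1[OF b] PT_ne2[OF b] by auto
next
  fix b assume "b \<notin> {2..n}" then show "PT T n b = undefined" unfolding PT_def by auto
qed

sublocale Q: rtree "PT T n" n
  using PF_rtree[OF PT_PF n2] .

lemma desc_Lc: "anc (PT T n) n b d \<Longrightarrow> Lc T b \<le> Lc T d"
proof (induction rule: anc.induct)
  case (anc_refl d) then show ?case by simp
next
  case (anc_step d b)
  have "Lc T (PT T n d) \<le> Lc T d" using Lc_le PT_props(2)[of d] anc_step by auto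
  then show ?case using anc_step by simp
qed

lemma col_desc: assumes b: "b \<in> {1..n}"
  shows "(x, Lc T b) \<in> T \<Longrightarrow> b \<le> x \<Longrightarrow> anc (PT T n) n b x"
proof (induction x rule: less_induct)
  case (less x)
  show ?case
  proof (cases "x = b")
    case True then show ?thesis using anc.anc_refl[of "PT T n" n x] by simp
  next
    case False
    then have bx: "b < x" using less by simp
    have hb: "(b, Lc T b) \<in> T" using Lc_in b by simp
    have lx: "Lc T x = Lc T b" using below_head[OF hb less.prems(1) bx] .
    have "x \<le> n" using subsetD[OF sub less.prems(1)] by simp
    moreover have "2 \<le> x" using bx b by simp
    ultimately have x: "x \<in> {2..n}" by simp
    have q1: "PT T n x < x" by (rule PT_props(1)[OF x])
    have q2: "(PT T n x, Lc T b) \<in> T" using PT_props(2)[OF x] lx by simp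
    have q3: "b \<le> PT T n x" using PT_props(3)[OF x bx] hb lx by simp
    have h: "anc (PT T n) n b (PT T n x)" by (rule less.IH[OF q1 q2 q3])
    have "2 \<le> x" "x \<le> n" using x by auto
    from anc.anc_step[OF this h] show ?thesis .
  qed
qed

lemma lf_eq: assumes b: "b \<in> {1..n}" shows "lf (PT T n) n b = Suc n - Lc T b"
proof (rule antisym)
  let ?l = "lf (PT T n) n b"
  have l: "?l \<in> {1..n}" "anc (PT T n) n b ?l" using Q.lf_props[OF b] by auto
  have "Lc T b \<le> Lc T ?l" using desc_Lc[OF l(2)] .
  moreover have "?l + Lc T ?l \<le> Suc n" using stair Lc_in[OF l(1)] by auto
  ultimately show "?l \<le> Suc n - Lc T b" by simp
next
  let ?c = "Lc T b"
  have hb: "(b, ?c) \<in> T" using Lc_in b by simp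
  then have c: "?c \<in> {1..n}" using sub by auto
  have "(Suc n - ?c, Suc n - (Suc n - ?c)) \<in> T" by (rule anti) (use c in auto)
  then have "(Suc n - ?c, ?c) \<in> T" using c by auto
  moreover have "b \<le> Suc n - ?c" using stair[OF hb] by simp
  ultimately have "anc (PT T n) n b (Suc n - ?c)" using col_desc[OF b] by auto
  then show "Suc n - ?c \<le> lf (PT T n) n b" using Q.lf_props(4)[OF b] c by auto
qed

lemma T_eq: "TP (PT T n) n = T"
proof
  show "TP (PT T n) n \<subseteq> T"
  proof
    fix p assume "p \<in> TP (PT T n) n"
    then obtain i j where p: "p = (i,j)" "i \<in> {1..n}" "j \<in> {1..n}" "Suc n - j \<in> MS (PT T n) n i"
      using Q.TP_mem by (cases p) auto
    show "p \<in> T"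
    proof (cases "Suc n - j = i")
      case True
      then have "j = Suc n - i" using p by auto
      then show ?thesis using anti p by auto
    next
      case False
      then obtain b where b: "b \<in> {2..n}" "PT T n b = i" "Suc n - j = lf (PT T n) n b"
        using p(4) unfolding MS_def by auto
      have "Suc n - j = Suc n - Lc T b" using lf_eq[of b] b by auto
      moreover have "Lc T b \<in> {1..n}" using Lc_in[of b] b sub by auto
      ultimately have "j = Lc T b" using p by auto
      then show ?thesis using PT_props(2)[OF b(1)] b p by simp
    qed
  qed
next
  show "T \<subseteq> TP (PT T n) n"
  proof
    fix p assume pT: "p \<in> T"
    obtain i j where p: "p = (i,j)" by force
    have ij: "(i,j) \<in> T" "i \<in> {1..n}" "j \<in> {1..n}" using pT p sub by auto
    have "Suc n - j \<in> MS (PT T n) n i"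
    proof (cases "i + j = Suc n")
      case True then show ?thesis unfolding MS_def by auto
    next
      case False
      then have lt: "i + j < Suc n" using stair ij by force
      have "(Suc n - j, Suc n - (Suc n - j)) \<in> T" by (rule anti) (use ij in auto)
      then have "(Suc n - j, j) \<in> T \<and> i < Suc n - j" using ij lt by auto
      then have ex1: "\<exists>x. i < x \<and> (x, j) \<in> T" by blast
      define x where "x = (LEAST x. i < x \<and> (x,j) \<in> T)"
      have x: "i < x" "(x,j) \<in> T" "\<And>y. i < y \<Longrightarrow> (y,j) \<in> T \<Longrightarrow> x \<le> y"
        unfolding x_def using ex1 by (metis (mono_tags, lifting) LeastI_ex Least_le)+
      have lx: "Lc T x = j" using below_head[OF ij(1) x(2) x(1)] .
      have xr: "x \<in> {2..n}" using x sub ij by auto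
      have q: "PT T n x < x" "(PT T n x, j) \<in> T" "i \<le> PT T n x"
        using PT_props[OF xr] lx ij x by auto
      have "PT T n x = i"
      proof (rule ccontr)
        assume "PT T n x \<noteq> i"
        then have "i < PT T n x" using q by simp
        then have "x \<le> PT T n x" using x(3) q by auto
        then show False using q by simp
      qed
      moreover have "lf (PT T n) n x = Suc n - j" using lf_eq[of x] xr lx by auto
      ultimately show ?thesis unfolding MS_def
        apply (intro insertI2 CollectI)
        apply (rule exI[of _ x])
        using xr by auto
    qed
    then show "p \<in> TP (PT T n) n" using Q.TP_mem ij p by auto
  qed
qed

end

lemma card_PF: "2 \<le> n \<Longrightarrow> card (PF n) = fact (n - 2)"
proof -
  assume n: "2 \<le> n"
  have c: "card (PF n) = (\<Prod>b\<in>{2..n}. card ({1..<b} - {2::nat}))"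
    unfolding PF_def by (rule card_PiE) simp
  have pk: "\<And>k. (\<Prod>b\<in>{2..k+2}. card ({1..<b} - {2::nat})) = fact k"
  proof -
    fix k show "(\<Prod>b\<in>{2..k+2}. card ({1..<b} - {2::nat})) = fact k"
    proof (induction k)
      case 0
      have "{1..<2::nat} - {2} = {1}" by auto
      then show ?case by simp
    next
      case (Suc k)
      have s: "{2..Suc k + 2} = insert (k+3) {2..k+2}" by auto
      have "card ({1..<k+3} - {2::nat}) = Suc k" by (subst card_Diff_singleton) auto
      then show ?case using Suc by (simp add: s)
    qed
  qed
  obtain k where k: "n = k + 2" using n by (metis add.commute le_add_diff_inverse)
  have "card (PF n) = (\<Prod>b\<in>{2..k+2}. card ({1..<b} - {2::nat}))" using c by (simp only: k)
  also have "\<dots> = fact k" by (rule pk)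
  finally have "card (PF n) = fact k" .
  then show ?thesis using k by simp
qed

theorem lemma4p7:
  fixes n :: nat
  assumes "n \<ge> 2"
  shows "f_cnm n 0 = fact (n - 2)"
proof -
  define F where "F = {T. upper_diagonal_cnm n T \<and> (1, n - 1) \<in> T}"
  have f: "f_cnm n 0 = card F" unfolding f_cnm_def F_def using assms by simp
  have "bij_betw (\<lambda>P. TP P n) (PF n) F"
  proof (rule bij_betw_imageI)
    show "inj_on (\<lambda>P. TP P n) (PF n)"
    proof (rule inj_onI)
      fix P P' assume h: "P \<in> PF n" "P' \<in> PF n" "TP P n = TP P' n"
      interpret a: rtree P n using PF_rtree h(1) assms .
      interpret b: rtree P' n using PF_rtree h(2) assms .
      have "P = PT (TP P n) n" using a.PT_TP h(1) unfolding PF_def by (simp add: PiE_def)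
      also have "\<dots> = PT (TP P' n) n" using h(3) by simp
      also have "\<dots> = P'" using b.PT_TP h(2) unfolding PF_def by (simp add: PiE_def)
      finally show "P = P'" .
    qed
    show "(\<lambda>P. TP P n) ` PF n = F"
    proof
      show "(\<lambda>P. TP P n) ` PF n \<subseteq> F"
      proof
        fix T assume "T \<in> (\<lambda>P. TP P n) ` PF n"
        then obtain P where P: "P \<in> PF n" "T = TP P n" by auto
        interpret rtree P n using PF_rtree P(1) assms .
        show "T \<in> F" unfolding F_def using TP_UD PF_corner[OF P(1) assms] P(2) by auto
      qed
    next
      show "F \<subseteq> (\<lambda>P. TP P n) ` PF n"
      proof
        fix T assume "T \<in> F"
        then interpret udt T n using assms unfolding F_def by unfold_locales auto
        show "T \<in> (\<lambda>P. TP P n) ` PF n" using T_eq PT_PF by (metis image_eqI)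
      qed
    qed
  qed
  then have "card F = card (PF n)" by (rule bij_betw_same_card[symmetric])
  then show ?thesis using f card_PF[OF assms] by simp
qed


end
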